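(* Let $a>0$ satisfy $p(e^a-1) < \frac{q_I}{2}(1-e^{-a})$ and define $\Phi([x_1,\dots,x_I]) = \sum_{i=1}^I e^{a x_i}$. Then there exists $b>0$ such that, for the controlled queue-length vector $X_t = [X^1_t,\dots,X^I_t]$ and $\theta := [0,\dots,0]$, $$\mathbb{E}\left[\Phi(X_{t+1}) - \Phi(X_t)\,\middle|\, X_t\right] \le -b\,\Phi(X_t) \quad \text{whenever } X_t \neq \theta,$$ and this holds regardless of the choice of the admissible controls $\{\nu^i_t\}$.
   Context: Processor sharing model: a single Bernoulli arrival process $\{\xi_t\}$ ($\xi_t\in\{0,1\}$ i.i.d., $P(\xi_t=1)=p\in(0,1)$). There are $I$ queues (servers) with queue lengths $X^i_t\in\{0,1,2,\dots\}$ evolving as $X^i_{t+1} = X^i_t - D^i_{t+1} + \nu^i_t \xi_{t+1}$, where $\nu^i_t\in\{0,1\}$ is a control ($1$ = active: arrivals admitted to queue $i$; $0$ = passive) with $\sum_i \nu^i_t = 1$ for all $t$, and the controls are admissible, i.e. $\nu_t$ is conditionally independent of future departures and arrivals given the past history. Departures follow egalitarian processor sharing: server $i$ has capacity $q_i$; given $X^i_t = x\ge 1$, $D^i_{t+1}\sim \mathrm{Binomial}(x, q_i/x)$, i.e. $P(d \text{ departures}) = \binom{x}{d}(q_i/x)^d(1-q_i/x)^{x-d}$; if $x=0$ there are no departures. Standing assumption: $1>q_1>q_2>\dots>q_I>2p>0$. *)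

theory Defs
  imports "HOL-Probability.Probability"
begin

text \<open>Queues are indexed by 0..<I (paper: 1..I); capacities q :: nat => real.
  A state is x :: nat => nat, only the coordinates i < I are relevant.\<close>

text \<open>Departures from a queue of capacity qi holding x jobs (egalitarian processor sharing).\<close>
definition dep_pmf :: "real \<Rightarrow> nat \<Rightarrow> nat pmf" where
  "dep_pmf qi x = (if x = 0 then return_pmf 0 else binomial_pmf x (qi / real x))"

definition valid_control :: "nat \<Rightarrow> (nat \<Rightarrow> nat) \<Rightarrow> bool" where
  "valid_control I \<nu> \<longleftrightarrow> (\<forall>i<I. \<nu> i \<in> {0,1}) \<and> (\<Sum>i<I. \<nu> i) = 1"

definition next_pmf :: "real \<Rightarrow> (nat \<Rightarrow> real) \<Rightarrow> nat \<Rightarrow> (nat \<Rightarrow> nat) \<Rightarrow> (nat \<Rightarrow> nat) \<Rightarrow> (nat \<Rightarrow> nat) pmf" where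
  "next_pmf p q I x \<nu> =
     map_pmf (\<lambda>(D, \<xi>). \<lambda>i. if i < I then x i - D i + (if \<xi> then \<nu> i else 0) else 0)
       (pair_pmf (Pi_pmf {..<I} 0 (\<lambda>i. dep_pmf (q i) (x i))) (bernoulli_pmf p))"

text \<open>One step under a (possibly randomized) admissible control: the control is drawn from
  mu (its conditional law given the past), independently of the future departures/arrivals.\<close>
definition step_pmf :: "real \<Rightarrow> (nat \<Rightarrow> real) \<Rightarrow> nat \<Rightarrow> (nat \<Rightarrow> nat) \<Rightarrow> (nat \<Rightarrow> nat) pmf \<Rightarrow> (nat \<Rightarrow> nat) pmf" where
  "step_pmf p q I x \<mu> = bind_pmf \<mu> (\<lambda>\<nu>. next_pmf p q I x \<nu>)"

definition Phi :: "real \<Rightarrow> nat \<Rightarrow> (nat \<Rightarrow> nat) \<Rightarrow> real" where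
  "Phi a I x = (\<Sum>i<I. exp (a * real (x i)))"

end

theory Submission
  imports Defs
begin

lemma finite_dep: "0 \<le> qi \<Longrightarrow> qi \<le> 1 \<Longrightarrow> finite (set_pmf (dep_pmf qi x))"
  unfolding dep_pmf_def by (auto simp: set_pmf_binomial_eq divide_le_eq_1)

lemma dep_le: "0 \<le> qi \<Longrightarrow> qi \<le> 1 \<Longrightarrow> d \<in> set_pmf (dep_pmf qi x) \<Longrightarrow> d \<le> x"
  unfolding dep_pmf_def by (auto simp: set_pmf_binomial_eq divide_le_eq_1 split: if_splits)

lemma dep_zero: "d \<in> set_pmf (dep_pmf qi 0) \<Longrightarrow> d = 0"
  unfolding dep_pmf_def by auto

lemma dep_prob:
  assumes "0 < qi" "qi < 1" "x \<ge> 1"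
  shows "measure_pmf.expectation (dep_pmf qi x) (\<lambda>d. of_bool (d \<noteq> 0)) = 1 - (1 - qi / real x) ^ x"
proof -
  have "(\<lambda>d::nat. (of_bool (d \<noteq> 0))::real) = (\<lambda>d. 1 - indicator {0} d)"
    by (auto simp: fun_eq_iff)
  then have "measure_pmf.expectation (dep_pmf qi x) (\<lambda>d. of_bool (d \<noteq> 0)) =
     1 - measure_pmf.prob (dep_pmf qi x) {0}"
    by (simp add: Bochner_Integration.integral_diff[OF measure_pmf.integrable_const] measure_pmf.integrable_const_bound[where B=1])
  also have "\<dots> = 1 - (1 - qi / real x) ^ x"
    using assms unfolding dep_pmf_def measure_pmf_single
    by (simp add: pmf_binomial)
  finally show ?thesis .
qed

lemma exp_bound: fixes c :: real assumes "0 \<le> c" "c \<le> 1" shows "exp (-c) \<le> 1 - c/2"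
proof -
  have "1 + c \<le> exp c" by (rule exp_ge_add_one_self)
  then have "exp (-c) \<le> 1/(1+c)" using assms by (simp add: exp_minus field_simps)
  also have "\<dots> \<le> 1 - c/2"
  proof -
    have "(1 - c/2)*(1+c) = 1 + c/2*(1-c)" by (simp add: field_simps)
    moreover have "c/2*(1-c) \<ge> 0" using assms by simp
    ultimately have "1 \<le> (1 - c/2)*(1+c)" by linarith
    then show ?thesis using assms by (simp add: divide_le_eq)
  qed
  finally show ?thesis .
qed

lemma pow_bound: assumes "0 \<le> c" "c \<le> 1" "x \<ge> (1::nat)"
  shows "(1 - c / real x) ^ x \<le> 1 - c/2"
proof -
  have "0 \<le> 1 - c / real x" using assms by (simp add: field_simps)
  moreover have "1 - c / real x \<le> exp (- (c / real x))"
    using exp_ge_add_one_self[of "- (c / real x)"] by simp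
  ultimately have "(1 - c / real x) ^ x \<le> exp (- (c / real x)) ^ x" by (intro power_mono)
  also have "\<dots> = exp (-c)" using assms by (simp add: exp_of_nat_mult[symmetric])
  also have "\<dots> \<le> 1 - c/2" by (rule exp_bound) (use assms in auto)
  finally show ?thesis .
qed

lemma bind_le:
  fixes g :: "'b \<Rightarrow> real"
  assumes "\<And>\<nu>. \<nu> \<in> set_pmf \<mu> \<Longrightarrow> measure_pmf.expectation (N \<nu>) g \<le> c"
    and "\<And>y. y \<in> set_pmf (bind_pmf \<mu> N) \<Longrightarrow> \<bar>g y\<bar> \<le> B"
  shows "measure_pmf.expectation (bind_pmf \<mu> N) g \<le> c"
proof -
  define g' where "g' y = max (-B) (min B (g y))" for y
  have B: "0 \<le> B" using assms(2)[of "SOME y. y \<in> set_pmf (bind_pmf \<mu> N)"] set_pmf_not_empty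
    by (metis abs_ge_zero order.trans some_in_eq)
  have g'b: "\<bar>g' y\<bar> \<le> B" for y using B unfolding g'_def by auto
  have eq: "y \<in> set_pmf (bind_pmf \<mu> N) \<Longrightarrow> g' y = g y" for y
    using assms(2)[of y] unfolding g'_def by auto
  have "measure_pmf.expectation (bind_pmf \<mu> N) g = measure_pmf.expectation (bind_pmf \<mu> N) g'"
    by (intro integral_cong_AE) (auto simp: AE_measure_pmf_iff eq)
  also have "\<dots> = \<integral>\<nu>. measure_pmf.expectation (N \<nu>) g' \<partial>measure_pmf \<mu>"
    unfolding measure_pmf_bind
    by (rule integral_bind[where K="count_space UNIV" and B=B and B'=1])
       (auto simp: g'b measurable_measure_pmf space_subprob_algebra subprob_space_measure_pmf intro: measure_pmf.finite_measure
             simp: measure_pmf.emeasure_space_1)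
  also have "\<dots> \<le> c"
  proof (rule measure_pmf.integral_le_const)
    show "integrable (measure_pmf \<mu>) (\<lambda>\<nu>. measure_pmf.expectation (N \<nu>) g')"
    proof (rule measure_pmf.integrable_const_bound[where B=B])
      show "AE \<nu> in measure_pmf \<mu>. norm (measure_pmf.expectation (N \<nu>) g') \<le> B"
      proof (intro AE_pmfI)
        fix \<nu> have "norm (measure_pmf.expectation (N \<nu>) g') \<le> (\<integral>y. norm (g' y) \<partial>N \<nu>)"
          by (rule integral_norm_bound)
        also have "\<dots> \<le> B"
          by (rule measure_pmf.integral_le_const)
             (auto intro!: measure_pmf.integrable_const_bound[where B=B] simp: g'b)
        finally show "norm (measure_pmf.expectation (N \<nu>) g') \<le> B" .
      qed
    qed simp
    show "AE \<nu> in measure_pmf \<mu>. measure_pmf.expectation (N \<nu>) g' \<le> c"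
    proof (intro AE_pmfI)
      fix \<nu> assume nu: "\<nu> \<in> set_pmf \<mu>"
      have "measure_pmf.expectation (N \<nu>) g' = measure_pmf.expectation (N \<nu>) g"
        using nu by (intro integral_cong_AE) (auto simp: AE_measure_pmf_iff intro!: eq)
      then show "measure_pmf.expectation (N \<nu>) g' \<le> c" using assms(1) nu by simp
    qed
  qed
  finally show ?thesis .
qed



lemma pt:
  fixes a :: real and x d v :: nat
  assumes "d \<le> x" "v \<le> 1" "a > 0"
  shows "exp (a * real (x - d + (if \<xi> then v else 0))) - exp (a * real x)
    \<le> - exp (a * real x) * (1 - exp (-a)) * of_bool (d \<noteq> 0) + exp (a * real x) * real v * (exp a - 1) * of_bool \<xi>"
proof -
  define w where "w = (if \<xi> then v else 0)"
  have w1: "exp (a * real w) = 1 + real v * (exp a - 1) * of_bool \<xi>"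
    using assms(2) le_Suc_eq[of v 0] unfolding w_def by (cases "v = 0") (auto simp: le_Suc_eq)
  have e: "exp (a * real (x - d + w)) = exp (a * real x) * exp (- (a * real d)) * exp (a * real w)"
    using assms(1) by (simp add: of_nat_diff algebra_simps flip: exp_add)
  have d1: "exp (- (a * real d)) \<le> 1 - (1 - exp (-a)) * of_bool (d \<noteq> 0)"
  proof (cases "d = 0")
    case False
    then have "a \<le> a * real d" using assms(3) by simp
    then show ?thesis using False by simp
  qed simp
  have E: "exp (a * real x) > 0" by simp
  have W: "exp (a * real w) \<ge> 1" using assms(3) by simp
  have "exp (a * real (x - d + w)) \<le> exp (a * real x) * (1 - (1 - exp (-a)) * of_bool (d \<noteq> 0)) * exp (a * real w)"
    unfolding e using d1 E W by (intro mult_right_mono mult_left_mono) auto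
  also have "\<dots> = exp (a * real x) * (1 + real v * (exp a - 1) * of_bool \<xi>)
       - exp (a * real x) * (1 - exp (-a)) * of_bool (d \<noteq> 0) * (1 + real v * (exp a - 1) * of_bool \<xi>)"
    unfolding w1 by (simp add: algebra_simps)
  also have "\<dots> \<le> exp (a * real x) * (1 + real v * (exp a - 1) * of_bool \<xi>)
       - exp (a * real x) * (1 - exp (-a)) * of_bool (d \<noteq> 0)"
  proof -
    have "0 \<le> exp (a * real x) * (1 - exp (-a)) * of_bool (d \<noteq> 0)" using assms(3) by simp
    moreover have "0 \<le> real v * (exp a - 1) * of_bool \<xi>" using assms(3) by simp
    ultimately have "exp (a * real x) * (1 - exp (-a)) * of_bool (d \<noteq> 0) * 1 \<le> exp (a * real x) * (1 - exp (-a)) * of_bool (d \<noteq> 0) * (1 + real v * (exp a - 1) * of_bool \<xi>)"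
      by (intro mult_left_mono) auto
    then show ?thesis by simp
  qed
  finally show ?thesis unfolding w_def by (simp add: algebra_simps)
qed



lemma next_bound:
  fixes x :: "nat \<Rightarrow> nat" and a p :: real
  assumes p: "0 < p" "p < 1" and a: "a > 0"
    and q: "\<And>i. i < I \<Longrightarrow> 0 < q i \<and> q i < 1"
    and v: "valid_control I \<nu>"
  shows "measure_pmf.expectation (next_pmf p q I x \<nu>) (\<lambda>y. Phi a I y - Phi a I x)
     \<le> (\<Sum>i<I. - exp (a * real (x i)) * (1 - exp (-a)) *
             (if x i = 0 then 0 else 1 - (1 - q i / real (x i)) ^ x i)
           + exp (a * real (x i)) * real (\<nu> i) * (exp a - 1) * p)"
proof -
  define A where "A = Pi_pmf {..<I} 0 (\<lambda>i. dep_pmf (q i) (x i))"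
  define F where "F = (\<lambda>(D, \<xi>). \<lambda>i. if i < I then x i - D i + (if \<xi> then \<nu> i else 0) else (0::nat))"
  define M where "M = pair_pmf A (bernoulli_pmf p)"
  define h where "h i z = - exp (a * real (x i)) * (1 - exp (-a)) * of_bool (fst z i \<noteq> (0::nat))
      + exp (a * real (x i)) * real (\<nu> i) * (exp a - 1) * of_bool (snd z)" for i z
  have setA: "set_pmf A = PiE_dflt {..<I} 0 (set_pmf \<circ> (\<lambda>i. dep_pmf (q i) (x i)))"
    unfolding A_def by (rule set_Pi_pmf) simp
  have finA: "finite (set_pmf A)" unfolding setA
  proof (intro finite_PiE_dflt)
    fix i :: nat assume "i \<in> {..<I}"
    then have "0 \<le> q i" "q i \<le> 1" using q[of i] by auto
    then show "finite ((set_pmf \<circ> (\<lambda>i. dep_pmf (q i) (x i))) i)" by (simp add: finite_dep)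
  qed simp
  have finM: "finite (set_pmf M)" unfolding M_def using finA by simp
  note int = integrable_measure_pmf_finite[OF finM]
  have nxt: "next_pmf p q I x \<nu> = map_pmf F M"
    unfolding next_pmf_def F_def M_def A_def ..
  have "measure_pmf.expectation (next_pmf p q I x \<nu>) (\<lambda>y. Phi a I y - Phi a I x)
      = measure_pmf.expectation M (\<lambda>z. Phi a I (F z) - Phi a I x)"
    unfolding nxt by simp
  also have "\<dots> \<le> measure_pmf.expectation M (\<lambda>z. \<Sum>i<I. h i z)"
  proof (rule integral_mono_AE[OF int int], rule AE_pmfI)
    fix z assume z: "z \<in> set_pmf M"
    obtain D \<xi> where zD: "z = (D, \<xi>)" by (cases z)
    have D: "D \<in> set_pmf A" using z unfolding zD M_def by simp
    have Dle: "D i \<le> x i" if "i < I" for i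
      using D that q[OF that] unfolding setA by (auto simp: PiE_dflt_def intro: dep_le[of "q i"])
    have "Phi a I (F z) - Phi a I x = (\<Sum>i<I. exp (a * real (x i - D i + (if \<xi> then \<nu> i else 0))) - exp (a * real (x i)))"
      unfolding Phi_def zD F_def by (simp add: sum_subtractf)
    also have "\<dots> \<le> (\<Sum>i<I. h i z)"
    proof (rule sum_mono)
      fix i assume i: "i \<in> {..<I}"
      have "\<nu> i \<le> 1" using v i unfolding valid_control_def by auto
      then show "exp (a * real (x i - D i + (if \<xi> then \<nu> i else 0))) - exp (a * real (x i)) \<le> h i z"
        unfolding h_def zD using pt[OF Dle _ a] i by simp
    qed
    finally show "Phi a I (F z) - Phi a I x \<le> (\<Sum>i<I. h i z)" .
  qed
  also have "\<dots> = (\<Sum>i<I. measure_pmf.expectation M (h i))"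
    by (rule Bochner_Integration.integral_sum) (rule int)
  also have "\<dots> = (\<Sum>i<I. - exp (a * real (x i)) * (1 - exp (-a)) *
             (if x i = 0 then 0 else 1 - (1 - q i / real (x i)) ^ x i)
           + exp (a * real (x i)) * real (\<nu> i) * (exp a - 1) * p)"
  proof (rule sum.cong[OF refl])
    fix i assume i: "i \<in> {..<I}"
    have e1: "measure_pmf.expectation M (\<lambda>z. of_bool (fst z i \<noteq> (0::nat))) =
        (if x i = 0 then 0 else 1 - (1 - q i / real (x i)) ^ x i)"
    proof -
      have "measure_pmf.expectation M (\<lambda>z. of_bool (fst z i \<noteq> (0::nat)) :: real)
          = measure_pmf.expectation A (\<lambda>D. of_bool (D i \<noteq> 0))"
        unfolding M_def by (rule expectation_pair_pmf_fst)
      also have "\<dots> = measure_pmf.expectation (map_pmf (\<lambda>D. D i) A) (\<lambda>d. of_bool (d \<noteq> 0))"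
        by simp
      also have "map_pmf (\<lambda>D. D i) A = dep_pmf (q i) (x i)"
        unfolding A_def using i by (subst Pi_pmf_component) auto
      also have "measure_pmf.expectation (dep_pmf (q i) (x i)) (\<lambda>d. of_bool (d \<noteq> 0)) =
          (if x i = 0 then 0 else 1 - (1 - q i / real (x i)) ^ x i)"
      proof (cases "x i = 0")
        case True then show ?thesis by (simp add: dep_pmf_def)
      next
        case False then show ?thesis using q[of i] i dep_prob[of "q i" "x i"] by simp
      qed
      finally show ?thesis .
    qed
    have e2: "measure_pmf.expectation M (\<lambda>z. of_bool (snd z)) = p"
    proof -
      have "measure_pmf.expectation M (\<lambda>z. of_bool (snd z) :: real)
          = measure_pmf.expectation (bernoulli_pmf p) (\<lambda>b. of_bool b)"
        unfolding M_def by (rule expectation_pair_pmf_snd)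
      also have "\<dots> = p" using p by simp
      finally show ?thesis .
    qed
    show "measure_pmf.expectation M (h i) = - exp (a * real (x i)) * (1 - exp (-a)) *
             (if x i = 0 then 0 else 1 - (1 - q i / real (x i)) ^ x i)
           + exp (a * real (x i)) * real (\<nu> i) * (exp a - 1) * p"
      unfolding h_def
      by (subst Bochner_Integration.integral_add[OF int int], simp only: integral_mult_right_zero e1 e2)
  qed
  finally show ?thesis .
qed



theorem lemma1:
  fixes p a :: real and q :: "nat \<Rightarrow> real" and I :: nat
  assumes "I \<ge> 1"
    and "0 < p" and "p < 1"
    and "q 0 < 1"
    and "\<And>i. Suc i < I \<Longrightarrow> q (Suc i) < q i"
    and "2 * p < q (I - 1)"
    and "a > 0"
    and "p * (exp a - 1) < q (I - 1) / 2 * (1 - exp (- a))"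
  shows "\<exists>b>0. \<forall>x :: nat \<Rightarrow> nat. \<forall>\<mu> :: (nat \<Rightarrow> nat) pmf.
           (\<exists>i<I. x i \<noteq> 0) \<longrightarrow> (\<forall>\<nu>\<in>set_pmf \<mu>. valid_control I \<nu>) \<longrightarrow>
           measure_pmf.expectation (step_pmf p q I x \<mu>) (\<lambda>y. Phi a I y - Phi a I x)
             \<le> - b * Phi a I x"
proof -
  note I = assms(1) and p = assms(2,3) and a = assms(7)
  have mono: "j < I \<Longrightarrow> i \<le> j \<Longrightarrow> q j \<le> q i" for i j
  proof (induction j)
    case (Suc j)
    then show ?case using assms(5)[of j] by (cases "i = Suc j") auto
  qed simp
  have qlow: "i < I \<Longrightarrow> q (I - 1) \<le> q i" for i using mono[of "I - 1" i] I by auto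
  have qup: "i < I \<Longrightarrow> q i < 1" for i using mono[of i 0] assms(4) by auto
  have qpos0: "q (I - 1) > 0" using assms(6) p by linarith
  have qpos: "i < I \<Longrightarrow> 0 < q i \<and> q i < 1" for i using qlow[of i] qup[of i] qpos0 by auto
  define k where "k = 1 - exp (-a)"
  define m where "m = exp a - 1"
  define \<delta> where "\<delta> = q (I - 1) / 2 * k"
  define \<epsilon> where "\<epsilon> = \<delta> - p * m"
  have k0: "0 < k" unfolding k_def using a by simp
  have m0: "0 \<le> m" unfolding m_def using a by simp
  have eps: "\<epsilon> > 0" using assms(8) unfolding \<epsilon>_def \<delta>_def k_def m_def by simp
  define b where "b = \<epsilon> / real I"
  have Ipos: "real I > 0" using I by simp
  show ?thesis
  proof (intro exI[of _ b] conjI allI impI)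
    show "b > 0" unfolding b_def using eps Ipos by simp
    fix x :: "nat \<Rightarrow> nat" and \<mu> :: "(nat \<Rightarrow> nat) pmf"
    assume nz: "\<exists>i<I. x i \<noteq> 0" and val: "\<forall>\<nu>\<in>set_pmf \<mu>. valid_control I \<nu>"
    define e where "e i = exp (a * real (x i))" for i
    define s where "s i = (if x i = 0 then 0 else e i)" for i
    define S where "S = (\<Sum>i<I. s i)"
    have e0: "e i > 0" for i unfolding e_def by simp
    have s0: "s i \<ge> 0" for i unfolding s_def using e0[of i] by (simp add: less_imp_le)
    have sS: "i < I \<Longrightarrow> s i \<le> S" for i unfolding S_def
      by (rule member_le_sum) (auto simp: s0)
    obtain j where j: "j < I" "x j \<noteq> 0" using nz by auto
    have S1: "1 \<le> S"
    proof -
      have "1 \<le> exp (a * real (x j))" using a by simp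
      moreover have "s j = exp (a * real (x j))" using j(2) unfolding s_def e_def by simp
      ultimately show ?thesis using sS[OF j(1)] by linarith
    qed
    have eS: "i < I \<Longrightarrow> e i \<le> S" for i
      using sS[of i] S1 unfolding s_def e_def by (auto split: if_splits)
    have PhiS: "Phi a I x \<le> real I * S"
    proof -
      have "Phi a I x = (\<Sum>i<I. e i)" unfolding Phi_def e_def ..
      also have "\<dots> \<le> (\<Sum>i<I. S)" by (rule sum_mono) (simp add: eS)
      finally show ?thesis by simp
    qed
    have key: "measure_pmf.expectation (next_pmf p q I x \<nu>) (\<lambda>y. Phi a I y - Phi a I x) \<le> - b * Phi a I x"
      if nu: "\<nu> \<in> set_pmf \<mu>" for \<nu>
    proof -
      have v: "valid_control I \<nu>" using val nu by auto
      have "measure_pmf.expectation (next_pmf p q I x \<nu>) (\<lambda>y. Phi a I y - Phi a I x)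
         \<le> (\<Sum>i<I. - e i * k * (if x i = 0 then 0 else 1 - (1 - q i / real (x i)) ^ x i)
           + e i * real (\<nu> i) * m * p)"
        using next_bound[OF p a qpos v] unfolding e_def k_def m_def by simp
      also have "\<dots> = - (\<Sum>i<I. e i * k * (if x i = 0 then 0 else 1 - (1 - q i / real (x i)) ^ x i))
           + m * p * (\<Sum>i<I. real (\<nu> i) * e i)"
        by (simp add: sum.distrib sum_negf sum_distrib_left sum_subtractf algebra_simps)
      also have "\<dots> \<le> - (\<Sum>i<I. \<delta> * s i) + m * p * (\<Sum>i<I. real (\<nu> i) * S)"
      proof -
        have A: "(\<Sum>i<I. \<delta> * s i) \<le> (\<Sum>i<I. e i * k * (if x i = 0 then 0 else 1 - (1 - q i / real (x i)) ^ x i))"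
        proof (rule sum_mono)
          fix i assume i: "i \<in> {..<I}"
          show "\<delta> * s i \<le> e i * k * (if x i = 0 then 0 else 1 - (1 - q i / real (x i)) ^ x i)"
          proof (cases "x i = 0")
            case True then show ?thesis unfolding s_def by simp
          next
            case False
            have "(1 - q i / real (x i)) ^ x i \<le> 1 - q i / 2"
              using qpos[of i] i False by (intro pow_bound) auto
            then have "q (I - 1) / 2 \<le> 1 - (1 - q i / real (x i)) ^ x i"
              using qlow[of i] i by simp
            then have "q (I - 1) / 2 * k \<le> (1 - (1 - q i / real (x i)) ^ x i) * k"
              using k0 by (intro mult_right_mono) auto
            then have "e i * (q (I - 1) / 2 * k) \<le> e i * ((1 - (1 - q i / real (x i)) ^ x i) * k)"
              using e0[of i] by (intro mult_left_mono) auto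
            then show ?thesis using False unfolding s_def \<delta>_def by (simp add: algebra_simps)
          qed
        qed
        have B: "(\<Sum>i<I. real (\<nu> i) * e i) \<le> (\<Sum>i<I. real (\<nu> i) * S)"
          by (rule sum_mono) (simp add: eS mult_left_mono)
        have B': "m * p * (\<Sum>i<I. real (\<nu> i) * e i) \<le> m * p * (\<Sum>i<I. real (\<nu> i) * S)"
          using B m0 p by (intro mult_left_mono) auto
        show ?thesis using A B' by linarith
      qed
      also have "\<dots> = - \<delta> * S + m * p * S * (\<Sum>i<I. real (\<nu> i))"
      proof -
        have "(\<Sum>i<I. \<delta> * s i) = \<delta> * S" unfolding S_def by (simp add: sum_distrib_left)
        moreover have "(\<Sum>i<I. real (\<nu> i) * S) = S * (\<Sum>i<I. real (\<nu> i))"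
          by (simp add: sum_distrib_left mult.commute)
        ultimately show ?thesis by (simp add: algebra_simps)
      qed
      also have "(\<Sum>i<I. real (\<nu> i)) = 1" using v unfolding valid_control_def
        by (metis of_nat_1 of_nat_sum)
      also have "- \<delta> * S + m * p * S * 1 = - \<epsilon> * S" unfolding \<epsilon>_def by (simp add: algebra_simps)
      also have "\<dots> \<le> - b * Phi a I x"
      proof -
        have "b * Phi a I x \<le> b * (real I * S)" using PhiS \<open>b > 0\<close> by (intro mult_left_mono) auto
        also have "\<dots> = \<epsilon> * S" unfolding b_def using Ipos by simp
        finally show ?thesis by simp
      qed
      finally show ?thesis .
    qed
    show "measure_pmf.expectation (step_pmf p q I x \<mu>) (\<lambda>y. Phi a I y - Phi a I x) \<le> - b * Phi a I x"
      unfolding step_pmf_def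
    proof (rule bind_le[where B="(\<Sum>i<I. exp (a * real (x i + 1))) + Phi a I x"])
      show "\<And>\<nu>. \<nu> \<in> set_pmf \<mu> \<Longrightarrow> measure_pmf.expectation (next_pmf p q I x \<nu>) (\<lambda>y. Phi a I y - Phi a I x) \<le> - b * Phi a I x"
        by (rule key)
      fix y assume y: "y \<in> set_pmf (\<mu> \<bind> next_pmf p q I x)"
      then obtain \<nu> where nu: "\<nu> \<in> set_pmf \<mu>" and yn: "y \<in> set_pmf (next_pmf p q I x \<nu>)" by auto
      have v: "valid_control I \<nu>" using val nu by auto
      have yle: "i < I \<Longrightarrow> y i \<le> x i + 1" for i
      proof -
        assume i: "i < I"
        have "\<nu> i \<le> 1" using v i unfolding valid_control_def by auto
        then show ?thesis using yn i unfolding next_pmf_def by auto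
      qed
      have P0: "Phi a I y \<ge> 0" "Phi a I x \<ge> 0" unfolding Phi_def by (auto intro: sum_nonneg)
      have "Phi a I y \<le> (\<Sum>i<I. exp (a * real (x i + 1)))" unfolding Phi_def
        using yle a by (intro sum_mono) (auto simp del: of_nat_Suc simp add: of_nat_le_iff[symmetric])
      then show "\<bar>Phi a I y - Phi a I x\<bar> \<le> (\<Sum>i<I. exp (a * real (x i + 1))) + Phi a I x"
        using P0 by linarith
    qed
  qed
qed


end
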